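(* Let $|\mathcal{T}|=2$ and let $P\in\Delta_{\mathcal{T},\mathcal{X},\mathcal{Y}}$ be such that $\operatorname{supp}(\Delta_P)=\mathcal{T}\times\mathcal{X}\times\mathcal{Y}$. Suppose $\tilde Q$ lies in the relative interior of $\Delta_P$ and $\tilde Q\in\arg\max_{Q\in\Delta_P}H_Q(T\mid X,Y)$. Then under $\tilde Q$, $T$ is conditionally independent of $X$ given $Y$, or $T$ is conditionally independent of $Y$ given $X$ (or both). Consequently $UI(T:X\setminus Y)=0$ or $UI(T:Y\setminus X)=0$.
   Context: $T,X,Y$ are random variables with finite state spaces $\mathcal{T},\mathcal{X},\mathcal{Y}$; $\Delta_{\mathcal{T},\mathcal{X},\mathcal{Y}}$ is the set of all joint distributions on $\mathcal{T}\times\mathcal{X}\times\mathcal{Y}$. For $P\in\Delta_{\mathcal{T},\mathcal{X},\mathcal{Y}}$, $\Delta_P=\{Q\in\Delta_{\mathcal{T},\mathcal{X},\mathcal{Y}}: Q(X=x,T=t)=P(X=x,T=t),\ Q(Y=y,T=t)=P(Y=y,T=t)\ \forall x,y,t\}$ and $\operatorname{supp}(\Delta_P)=\bigcup_{Q\in\Delta_P}\operatorname{supp}(Q)$. $UI(T:X\setminus Y)=\min_{Q\in\Delta_P}I_Q(T:X\mid Y)$, and $UI(T:Y\setminus X)=\min_{Q\in\Delta_P}I_Q(T:Y\mid X)$ (note $\Delta_P$ is symmetric in $X,Y$). *)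

theory Defs
  imports "HOL-Analysis.Analysis"
begin

text \<open>A joint distribution of (T,X,Y) on finite state spaces 't, 'x, 'y is a
  vector in the Euclidean space real^('t \<times> 'x \<times> 'y), the entry at (t,x,y)
  being P(T=t, X=x, Y=y).\<close>

type_synonym ('t,'x,'y) jdist = "real ^ ('t \<times> 'x \<times> 'y)"

definition is_dist :: "('t::finite,'x::finite,'y::finite) jdist \<Rightarrow> bool" where
  "is_dist Q \<longleftrightarrow> (\<forall>z. Q $ z \<ge> 0) \<and> (\<Sum>z\<in>UNIV. Q $ z) = 1"

definition pTX :: "('t::finite,'x::finite,'y::finite) jdist \<Rightarrow> 't \<Rightarrow> 'x \<Rightarrow> real" where
  "pTX Q t x = (\<Sum>y\<in>UNIV. Q $ (t,x,y))"

definition pTY :: "('t::finite,'x::finite,'y::finite) jdist \<Rightarrow> 't \<Rightarrow> 'y \<Rightarrow> real" where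
  "pTY Q t y = (\<Sum>x\<in>UNIV. Q $ (t,x,y))"

definition pXY :: "('t::finite,'x::finite,'y::finite) jdist \<Rightarrow> 'x \<Rightarrow> 'y \<Rightarrow> real" where
  "pXY Q x y = (\<Sum>t\<in>UNIV. Q $ (t,x,y))"

definition pX :: "('t::finite,'x::finite,'y::finite) jdist \<Rightarrow> 'x \<Rightarrow> real" where
  "pX Q x = (\<Sum>t\<in>UNIV. \<Sum>y\<in>UNIV. Q $ (t,x,y))"

definition pY :: "('t::finite,'x::finite,'y::finite) jdist \<Rightarrow> 'y \<Rightarrow> real" where
  "pY Q y = (\<Sum>t\<in>UNIV. \<Sum>x\<in>UNIV. Q $ (t,x,y))"

definition DeltaP :: "('t::finite,'x::finite,'y::finite) jdist \<Rightarrow> ('t,'x,'y) jdist set" where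
  "DeltaP P = {Q. is_dist Q \<and> (\<forall>t x. pTX Q t x = pTX P t x) \<and> (\<forall>t y. pTY Q t y = pTY P t y)}"

definition supp :: "('t::finite,'x::finite,'y::finite) jdist \<Rightarrow> ('t \<times> 'x \<times> 'y) set" where
  "supp Q = {z. Q $ z \<noteq> 0}"

definition suppDeltaP :: "('t::finite,'x::finite,'y::finite) jdist \<Rightarrow> ('t \<times> 'x \<times> 'y) set" where
  "suppDeltaP P = (\<Union>Q\<in>DeltaP P. supp Q)"

definition condH_T_XY :: "('t::finite,'x::finite,'y::finite) jdist \<Rightarrow> real" where
  "condH_T_XY Q = - (\<Sum>(t,x,y)\<in>UNIV. if Q $ (t,x,y) = 0 then 0
       else Q $ (t,x,y) * ln (Q $ (t,x,y) / pXY Q x y))"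

definition condMI_TX_Y :: "('t::finite,'x::finite,'y::finite) jdist \<Rightarrow> real" where
  "condMI_TX_Y Q = (\<Sum>(t,x,y)\<in>UNIV. if Q $ (t,x,y) = 0 then 0
       else Q $ (t,x,y) * ln (Q $ (t,x,y) * pY Q y / (pTY Q t y * pXY Q x y)))"

definition condMI_TY_X :: "('t::finite,'x::finite,'y::finite) jdist \<Rightarrow> real" where
  "condMI_TY_X Q = (\<Sum>(t,x,y)\<in>UNIV. if Q $ (t,x,y) = 0 then 0
       else Q $ (t,x,y) * ln (Q $ (t,x,y) * pX Q x / (pTX Q t x * pXY Q x y)))"

text \<open>Unique informations, UI(T:X\Y) = min over \<Delta>_P of I_Q(T:X|Y) (the minimum
  exists, so it equals the infimum).\<close>
definition UI_X :: "('t::finite,'x::finite,'y::finite) jdist \<Rightarrow> real" where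
  "UI_X P = Inf (condMI_TX_Y ` DeltaP P)"

definition UI_Y :: "('t::finite,'x::finite,'y::finite) jdist \<Rightarrow> real" where
  "UI_Y P = Inf (condMI_TY_X ` DeltaP P)"

definition indep_T_X_given_Y :: "('t::finite,'x::finite,'y::finite) jdist \<Rightarrow> bool" where
  "indep_T_X_given_Y Q \<longleftrightarrow> (\<forall>t x y. Q $ (t,x,y) * pY Q y = pTY Q t y * pXY Q x y)"

definition indep_T_Y_given_X :: "('t::finite,'x::finite,'y::finite) jdist \<Rightarrow> bool" where
  "indep_T_Y_given_X Q \<longleftrightarrow> (\<forall>t x y. Q $ (t,x,y) * pX Q x = pTX Q t x * pXY Q x y)"

end

theory Submission
  imports Defs "HOL-Analysis.Analysis"
begin


lemma sum_triple:
  fixes f :: "'t::finite \<times> 'x::finite \<times> 'y::finite \<Rightarrow> real"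
  shows "(\<Sum>z\<in>UNIV. f z) = (\<Sum>t\<in>UNIV. \<Sum>x\<in>UNIV. \<Sum>y\<in>UNIV. f (t,x,y))"
  by (simp add: UNIV_Times_UNIV[symmetric] sum.cartesian_product del: UNIV_Times_UNIV)

definition dlt :: "'a \<Rightarrow> 'a \<Rightarrow> real" where "dlt a z = (if z = a then 1 else 0)"

definition Dir :: "'t \<Rightarrow> 'x \<Rightarrow> 'x \<Rightarrow> 'y \<Rightarrow> 'y \<Rightarrow> ('t::finite,'x::finite,'y::finite) jdist" where
  "Dir t x x' y y' = (\<chi> z. dlt (t,x,y) z - dlt (t,x,y') z - dlt (t,x',y) z + dlt (t,x',y') z)"

lemma sum_dlt: "(\<Sum>z\<in>UNIV. dlt (a::_::finite) z * h z) = (h a :: real)"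
proof -
  have "(\<lambda>z. dlt a z * h z) = (\<lambda>z. if z = a then h a else 0)" by (auto simp: dlt_def)
  show ?thesis unfolding \<open>(\<lambda>z. dlt a z * h z) = _\<close> by simp
qed

lemma sum_Dir: "(\<Sum>z\<in>UNIV. Dir t x x' y y' $ z * h z) = h (t,x,y) - h (t,x,y') - h (t,x',y) + (h (t,x',y') :: real)"
  by (simp add: Dir_def left_diff_distrib distrib_right sum.distrib sum_subtractf sum_dlt)

lemma sum_Dir1: "(\<Sum>z\<in>UNIV. Dir t x x' y y' $ z) = 0"
  using sum_Dir[of t x x' y y' "\<lambda>_. 1"] by simp

lemma pTX_Dir: "pTX (Dir t x x' y y') t0 x0 = 0"
  unfolding pTX_def Dir_def dlt_def by (cases "t0 = t"; cases "x0 = x"; cases "x0 = x'"; simp add: sum.distrib sum_subtractf)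

lemma pTY_Dir: "pTY (Dir t x x' y y') t0 y0 = 0"
  unfolding pTY_def Dir_def dlt_def by (cases "t0 = t"; cases "y0 = y"; cases "y0 = y'"; simp add: sum.distrib sum_subtractf)

lemma pTX_lin: "pTX (Q + s *\<^sub>R D) t x = pTX Q t x + s * pTX D t x"
  by (simp add: pTX_def sum.distrib sum_distrib_left)
lemma pTY_lin: "pTY (Q + s *\<^sub>R D) t x = pTY Q t x + s * pTY D t x"
  by (simp add: pTY_def sum.distrib sum_distrib_left)
lemma pXY_lin: "pXY (Q + s *\<^sub>R D) t x = pXY Q t x + s * pXY D t x"
  by (simp add: pXY_def sum.distrib sum_distrib_left)



lemma sum_triple2:
  fixes f :: "'t::finite \<times> 'x::finite \<times> 'y::finite \<Rightarrow> real"
  shows "(\<Sum>z\<in>UNIV. f z) = (\<Sum>x\<in>UNIV. \<Sum>y\<in>UNIV. \<Sum>t\<in>UNIV. f (t,x,y))"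
  unfolding sum_triple[of f]
  apply (rule trans[OF sum.swap]) apply (rule sum.cong[OF refl]) apply (rule sum.swap) done

lemma aux: "(n::real) \<ge> 0 \<Longrightarrow> n/(2*(n+1)) < 1" by (simp add: divide_less_eq)

lemma pos_Qt:
  fixes P Qt :: "('t::finite,'x::finite,'y::finite) jdist"
  assumes "Qt \<in> rel_interior (DeltaP P)" "suppDeltaP P = UNIV"
  shows "Qt $ z > 0"
proof -
  let ?S = "DeltaP P"
  from assms(2) have "z \<in> suppDeltaP P" by simp
  then obtain Q where Q: "Q \<in> ?S" "Q $ z \<noteq> 0" unfolding suppDeltaP_def supp_def by auto
  have "Q $ z \<ge> 0" using Q(1) unfolding DeltaP_def is_dist_def by blast
  then have Qz: "Q $ z > 0" using Q(2) by linarith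
  from assms(1) obtain e where e: "e > 0" "ball Qt e \<inter> affine hull ?S \<subseteq> ?S" "Qt \<in> ?S"
    unfolding mem_rel_interior_ball by blast
  define c where "c = e / (2 * (norm (Q - Qt) + 1))"
  have c0: "c > 0" unfolding c_def using e by (intro divide_pos_pos) (auto intro: add_nonneg_pos)
  define W where "W = (1 + c) *\<^sub>R Qt + (- c) *\<^sub>R Q"
  have "W \<in> affine hull ?S"
    unfolding W_def
    by (rule mem_affine[OF affine_affine_hull]) (use e(3) Q(1) hull_inc in auto)
  moreover have "dist Qt W < e"
  proof -
    have "Qt - W = c *\<^sub>R (Q - Qt)" by (simp add: W_def algebra_simps)
    then have "dist Qt W = c * norm (Q - Qt)" by (simp add: dist_norm c0 less_imp_le)
    also have "\<dots> = e * (norm (Q - Qt) / (2 * (norm (Q - Qt) + 1)))" by (simp add: c_def)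
    also have "\<dots> < e * 1"
    proof (rule mult_strict_left_mono)
      show "norm (Q - Qt) / (2 * (norm (Q - Qt) + 1)) < 1"
        by (rule aux) simp
    qed (use e in auto)
    finally show ?thesis by simp
  qed
  ultimately have "W \<in> ?S" using e(2) by auto
  then have "W $ z \<ge> 0" unfolding DeltaP_def is_dist_def by blast
  then have "(1 + c) * Qt $ z - c * Q $ z \<ge> 0" by (simp add: W_def)
  moreover have "c * Q $ z > 0" using c0 Qz by simp
  ultimately have "(1 + c) * Qt $ z > 0" by linarith
  then show ?thesis using c0 by (simp add: zero_less_mult_iff)
qed



lemma pXY_pos: "(\<And>z. Q $ z > 0) \<Longrightarrow> pXY Q x y > 0"
  unfolding pXY_def by (rule sum_pos) auto

lemma condH_pos:
  fixes Q :: "('t::finite,'x::finite,'y::finite) jdist"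
  assumes "\<And>z. Q $ z > 0"
  shows "condH_T_XY Q = - (\<Sum>z\<in>UNIV. Q $ z * ln (Q $ z) - Q $ z * ln (pXY Q (fst (snd z)) (snd (snd z))))"
  unfolding condH_T_XY_def
proof (rule arg_cong[where f = uminus], rule sum.cong[OF refl])
  fix z :: "'t \<times> 'x \<times> 'y"
  obtain t x y where z: "z = (t,x,y)" by (cases z) auto
  have a: "Q $ z > 0" by (rule assms)
  have b: "pXY Q x y > 0" by (rule pXY_pos[OF assms])
  show "(case z of (t, x, y) \<Rightarrow> if Q $ (t, x, y) = 0 then 0 else Q $ (t, x, y) * ln (Q $ (t, x, y) / pXY Q x y)) =
         Q $ z * ln (Q $ z) - Q $ z * ln (pXY Q (fst (snd z)) (snd (snd z)))"
    using a b unfolding z by (simp add: ln_div right_diff_distrib)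
qed

lemma term_deriv:
  fixes a b d e :: real
  assumes "a > 0" "b > 0"
  shows "((\<lambda>s. (a + s*d) * ln (a + s*d) - (a + s*d) * ln (b + s*e)) has_real_derivative
          (d * ln a + d - (d * ln b + a * (e / b)))) (at 0)"
  using assms
  by (auto intro!: derivative_eq_intros simp: field_simps)



lemma FOC:
  fixes P Qt :: "('t::finite,'x::finite,'y::finite) jdist"
  assumes QD: "Qt \<in> DeltaP P" and pos: "\<And>z. Qt $ z > 0"
    and mx: "\<forall>Q\<in>DeltaP P. condH_T_XY Q \<le> condH_T_XY Qt"
  shows "ln (Qt $ (t,x,y) / pXY Qt x y) - ln (Qt $ (t,x,y') / pXY Qt x y')
       - ln (Qt $ (t,x',y) / pXY Qt x' y) + ln (Qt $ (t,x',y') / pXY Qt x' y') = 0"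
proof -
  define D :: "('t,'x,'y) jdist" where "D = Dir t x x' y y'"
  define m where "m = Min (range (\<lambda>z. Qt $ z))"
  have m0: "m > 0" unfolding m_def using pos by (subst Min_gr_iff) auto
  have mle: "\<And>z. m \<le> Qt $ z" unfolding m_def by (rule Min_le) auto
  have Dbd: "\<And>z. \<bar>D $ z\<bar> \<le> 4" unfolding D_def Dir_def dlt_def by auto
  define Qs where "Qs s = Qt + s *\<^sub>R D" for s
  have Qs_z: "\<And>s z. Qs s $ z = Qt $ z + s * D $ z" by (simp add: Qs_def)
  have Qs_pos: "Qs s $ z > 0" if "\<bar>s\<bar> < m/4" for s z
  proof -
    have "\<bar>s * D $ z\<bar> \<le> \<bar>s\<bar> * 4" unfolding abs_mult by (rule mult_left_mono[OF Dbd]) simp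
    then show ?thesis unfolding Qs_z using mle[of z] that by linarith
  qed
  have QDd: "is_dist Qt" "\<forall>t x. pTX Qt t x = pTX P t x" "\<forall>t y. pTY Qt t y = pTY P t y"
    using QD unfolding DeltaP_def by blast+
  have Qs_in: "Qs s \<in> DeltaP P" if "\<bar>s\<bar> < m/4" for s
  proof -
    have "(\<Sum>z\<in>UNIV. Qs s $ z) = (\<Sum>z\<in>UNIV. Qt $ z) + s * (\<Sum>z\<in>UNIV. D $ z)"
      unfolding Qs_z by (simp add: sum.distrib sum_distrib_left)
    also have "\<dots> = 1" using QDd(1) unfolding is_dist_def D_def sum_Dir1 by simp
    finally have s1: "(\<Sum>z\<in>UNIV. Qs s $ z) = 1" .
    have "is_dist (Qs s)" unfolding is_dist_def using s1 Qs_pos[OF that] less_imp_le by blast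
    moreover have "\<forall>t x. pTX (Qs s) t x = pTX P t x"
      using QDd(2) unfolding Qs_def pTX_lin D_def pTX_Dir by simp
    moreover have "\<forall>t y. pTY (Qs s) t y = pTY P t y"
      using QDd(3) unfolding Qs_def pTY_lin D_def pTY_Dir by simp
    ultimately show ?thesis unfolding DeltaP_def by blast
  qed
  define px where "px z = pXY Qt (fst (snd z)) (snd (snd z))" for z :: "'t \<times> 'x \<times> 'y"
  define pd where "pd z = pXY D (fst (snd z)) (snd (snd z))" for z :: "'t \<times> 'x \<times> 'y"
  have px_pos: "\<And>z. px z > 0" unfolding px_def by (rule pXY_pos[OF pos])
  define G where "G s = - (\<Sum>z\<in>UNIV. (Qt $ z + s * D $ z) * ln (Qt $ z + s * D $ z)
       - (Qt $ z + s * D $ z) * ln (px z + s * pd z))" for s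
  have G_eq: "G s = condH_T_XY (Qs s)" if "\<bar>s\<bar> < m/4" for s
  proof -
    have "condH_T_XY (Qs s) = - (\<Sum>z\<in>UNIV. Qs s $ z * ln (Qs s $ z) - Qs s $ z * ln (pXY (Qs s) (fst (snd z)) (snd (snd z))))"
      by (rule condH_pos[OF Qs_pos[OF that]])
    also have "\<dots> = G s" unfolding G_def Qs_z px_def pd_def unfolding Qs_def pXY_lin ..
    finally show ?thesis by simp
  qed
  define l where "l = - (\<Sum>z\<in>UNIV. D $ z * ln (Qt $ z) + D $ z - (D $ z * ln (px z) + Qt $ z * (pd z / px z)))"
  have der: "(G has_real_derivative l) (at 0)"
    unfolding G_def l_def
    by (intro DERIV_minus DERIV_sum term_deriv pos px_pos)
  have Qs0: "Qs 0 = Qt" by (simp add: Qs_def)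
  have "l = 0"
  proof (rule DERIV_local_max[OF der])
    show "0 < m/4" using m0 by simp
    show "\<forall>y. \<bar>0 - y\<bar> < m / 4 \<longrightarrow> G y \<le> G 0"
    proof (intro allI impI)
      fix s assume "\<bar>0 - s\<bar> < m/4"
      then have s: "\<bar>s\<bar> < m/4" by simp
      have "G s = condH_T_XY (Qs s)" by (rule G_eq[OF s])
      also have "\<dots> \<le> condH_T_XY Qt" using mx Qs_in[OF s] by blast
      also have "\<dots> = G 0" using G_eq[of 0] m0 Qs0 by simp
      finally show "G s \<le> G 0" .
    qed
  qed
  have sumD: "(\<Sum>z\<in>UNIV. D $ z) = 0" unfolding D_def by (rule sum_Dir1)
  have sumpd: "(\<Sum>z\<in>UNIV. Qt $ z * (pd z / px z)) = (\<Sum>z\<in>UNIV. D $ z)"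
  proof -
    have "(\<Sum>z\<in>UNIV. Qt $ z * (pd z / px z)) =
        (\<Sum>a\<in>UNIV. \<Sum>b\<in>UNIV. (\<Sum>c\<in>UNIV. Qt $ (c,a,b)) * (pXY D a b / pXY Qt a b))"
      by (subst sum_triple2[of "\<lambda>z. Qt $ z * (pd z / px z)"]) (simp add: px_def pd_def sum_distrib_right sum_divide_distrib)
    also have "\<dots> = (\<Sum>a\<in>UNIV. \<Sum>b\<in>UNIV. pXY D a b)"
      using pXY_pos[OF pos] by (simp add: pXY_def[symmetric] less_imp_neq[symmetric])
    also have "\<dots> = (\<Sum>z\<in>UNIV. D $ z)"
      unfolding sum_triple2[of "\<lambda>z. D $ z"] pXY_def by simp
    finally show ?thesis .
  qed
  have e1: "ln (Qt $ z / px z) = ln (Qt $ z) - ln (px z)" for z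
  proof -
    have "Qt $ z > 0" "px z > 0" by (rule pos, rule px_pos)
    then show ?thesis by (simp add: ln_div)
  qed
  have "- l = (\<Sum>z\<in>UNIV. D $ z * ln (Qt $ z)) + (\<Sum>z\<in>UNIV. D $ z)
      - ((\<Sum>z\<in>UNIV. D $ z * ln (px z)) + (\<Sum>z\<in>UNIV. Qt $ z * (pd z / px z)))"
    unfolding l_def by (simp only: sum.distrib sum_subtractf minus_minus)
  also have "\<dots> = (\<Sum>z\<in>UNIV. D $ z * ln (Qt $ z)) - (\<Sum>z\<in>UNIV. D $ z * ln (px z))"
    unfolding sumpd sumD by simp
  also have "\<dots> = (\<Sum>z\<in>UNIV. D $ z * ln (Qt $ z / px z))"
    by (simp only: e1 right_diff_distrib sum_subtractf)
  finally have "(\<Sum>z\<in>UNIV. D $ z * ln (Qt $ z / px z)) = - l" by simp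
  then have "(\<Sum>z\<in>UNIV. D $ z * ln (Qt $ z / px z)) = 0" using \<open>l = 0\<close> by simp
  then show ?thesis unfolding D_def sum_Dir px_def by simp
qed



lemma key_alg:
  fixes a b c d :: real
  assumes "a * d = b * c" "(1 - a) * (1 - d) = (1 - b) * (1 - c)"
  shows "(a = b \<and> c = d) \<or> (a = c \<and> b = d)"
proof -
  have s: "a + d = b + c" using assms by (simp add: algebra_simps)
  have "(a - b) * (a - c) = 0"
  proof -
    have "(a - b) * (a - c) = a * a - a * (b + c) + b * c" by (simp add: algebra_simps)
    also have "\<dots> = a * a - a * (a + d) + a * d" using s assms(1) by simp
    also have "\<dots> = 0" by (simp add: algebra_simps)
    finally show ?thesis .
  qed
  then have "a = b \<or> a = c" by simp
  then show ?thesis using s by auto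
qed

lemma global_comb:
  fixes p :: "'x \<Rightarrow> 'y \<Rightarrow> real"
  assumes H: "\<And>x x' y y'. (p x y = p x y' \<and> p x' y = p x' y') \<or> (p x y = p x' y \<and> p x y' = p x' y')"
  shows "(\<forall>x y y'. p x y = p x y') \<or> (\<forall>x x' y. p x y = p x' y)"
proof (rule disjCI)
  assume "\<not> (\<forall>x x' y. p x y = p x' y)"
  show "\<forall>x y y'. p x y = p x y'"
  proof (rule ccontr)
    assume "\<not> (\<forall>x y y'. p x y = p x y')"
    then obtain x0 y1 y2 where ne: "p x0 y1 \<noteq> p x0 y2" by blast
    have all: "p x0 y = p x' y" for x' y
    proof (cases "p x0 y = p x0 y1")
      case False
      then show ?thesis using H[of x0 y y1 x'] by auto
    next
      case True
      then have "p x0 y \<noteq> p x0 y2" using ne by simp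
      then show ?thesis using H[of x0 y y2 x'] by auto
    qed
    have "\<forall>x x' y. p x y = p x' y" using all by metis
    then show False using \<open>\<not> (\<forall>x x' y. p x y = p x' y)\<close> by blast
  qed
qed

lemma pX_alt: "pX Q x = (\<Sum>y\<in>UNIV. pXY Q x y)"
  unfolding pX_def pXY_def by (rule sum.swap)

lemma pY_alt: "pY Q y = (\<Sum>x\<in>UNIV. pXY Q x y)"
  unfolding pY_def pXY_def by (rule sum.swap)

lemma indep_Y_from_r:
  fixes Q :: "('t::finite,'x::finite,'y::finite) jdist"
  assumes pos: "\<And>z. Q $ z > 0"
    and H: "\<And>t x y y'. Q $ (t,x,y) / pXY Q x y = Q $ (t,x,y') / pXY Q x y'"
  shows "indep_T_Y_given_X Q"
  unfolding indep_T_Y_given_X_def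
proof (intro allI)
  fix t x y
  obtain y0 :: 'y where True by blast
  define c where "c = Q $ (t,x,y0) / pXY Q x y0"
  have Qe: "Q $ (t,x,y') = c * pXY Q x y'" for y'
  proof -
    have "pXY Q x y' > 0" by (rule pXY_pos[OF pos])
    then show ?thesis using H[where t=t and x=x and y=y' and y'=y0] unfolding c_def by (simp add: field_simps)
  qed
  have "pTX Q t x = c * pX Q x" unfolding pTX_def pX_alt Qe by (simp add: sum_distrib_left)
  then show "Q $ (t, x, y) * pX Q x = pTX Q t x * pXY Q x y" using Qe[of y] by simp
qed

lemma indep_X_from_r:
  fixes Q :: "('t::finite,'x::finite,'y::finite) jdist"
  assumes pos: "\<And>z. Q $ z > 0"
    and H: "\<And>t x x' y. Q $ (t,x,y) / pXY Q x y = Q $ (t,x',y) / pXY Q x' y"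
  shows "indep_T_X_given_Y Q"
  unfolding indep_T_X_given_Y_def
proof (intro allI)
  fix t x y
  obtain x0 :: 'x where True by blast
  define c where "c = Q $ (t,x0,y) / pXY Q x0 y"
  have Qe: "Q $ (t,x',y) = c * pXY Q x' y" for x'
  proof -
    have "pXY Q x' y > 0" by (rule pXY_pos[OF pos])
    then show ?thesis using H[where t=t and x=x' and x'=x0 and y=y] unfolding c_def by (simp add: field_simps)
  qed
  have "pTY Q t y = c * pY Q y" unfolding pTY_def pY_alt Qe by (simp add: sum_distrib_left)
  then show "Q $ (t, x, y) * pY Q y = pTY Q t y * pXY Q x y" using Qe[of x] by simp
qed



lemma gibbs_term:
  fixes A B C E :: real
  assumes "A > 0" "B > 0" "C > 0" "E > 0"
  shows "A - B * C / E \<le> A * ln (A * E / (B * C))"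
proof -
  define u where "u = B * C / (A * E)"
  have u0: "u > 0" using assms by (simp add: u_def)
  have "ln u \<le> u - 1" by (rule ln_le_minus_one[OF u0])
  moreover have "ln (A * E / (B * C)) = - ln u"
    unfolding u_def using assms by (simp add: ln_div ln_mult)
  ultimately have "A * (1 - u) \<le> A * (- ln u)"
    using assms(1) by (intro mult_left_mono) linarith+
  then have "A * ln (A * E / (B * C)) \<ge> A * (1 - u)"
    using \<open>ln (A * E / (B * C)) = - ln u\<close> by simp
  moreover have "A * (1 - u) = A - B * C / E" unfolding u_def using assms by (simp add: field_simps)
  ultimately show ?thesis by simp
qed

lemma sum_triple3:
  fixes f :: "'t::finite \<times> 'x::finite \<times> 'y::finite \<Rightarrow> real"
  shows "(\<Sum>z\<in>UNIV. f z) = (\<Sum>y\<in>UNIV. \<Sum>t\<in>UNIV. \<Sum>x\<in>UNIV. f (t,x,y))"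
  unfolding sum_triple[of f]
  apply (rule trans[OF sum.cong[OF refl sum.swap]]) apply (rule sum.swap) done

lemma sum_triple4:
  fixes f :: "'t::finite \<times> 'x::finite \<times> 'y::finite \<Rightarrow> real"
  shows "(\<Sum>z\<in>UNIV. f z) = (\<Sum>x\<in>UNIV. \<Sum>t\<in>UNIV. \<Sum>y\<in>UNIV. f (t,x,y))"
  unfolding sum_triple[of f] by (rule sum.swap)

lemma condMI_X_nonneg:
  fixes Q :: "('t::finite,'x::finite,'y::finite) jdist"
  assumes "is_dist Q"
  shows "condMI_TX_Y Q \<ge> 0"
proof -
  have nn: "\<And>z. Q $ z \<ge> 0" and s1: "(\<Sum>z\<in>UNIV. Q $ z) = 1" using assms unfolding is_dist_def by blast+
  have pTYnn: "pTY Q t y \<ge> 0" for t y unfolding pTY_def by (rule sum_nonneg) (simp add: nn)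
  have pXYnn: "pXY Q x y \<ge> 0" for x y unfolding pXY_def by (rule sum_nonneg) (simp add: nn)
  have pYnn: "pY Q y \<ge> 0" for y unfolding pY_def by (intro sum_nonneg) (simp add: nn)
  define w where "w z = (case z of (t,x,y) \<Rightarrow> pTY Q t y * pXY Q x y / pY Q y)" for z :: "'t \<times> 'x \<times> 'y"
  define g where "g z = (case z of (t,x,y) \<Rightarrow> if Q $ (t,x,y) = 0 then 0
       else Q $ (t,x,y) * ln (Q $ (t,x,y) * pY Q y / (pTY Q t y * pXY Q x y)))" for z :: "'t \<times> 'x \<times> 'y"
  have le: "Q $ z - w z \<le> g z" for z
  proof -
    obtain t x y where z: "z = (t,x,y)" by (cases z) auto
    have a: "Q $ (t,x,y) \<le> pTY Q t y" unfolding pTY_def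
      by (rule member_le_sum[where f = "\<lambda>x. Q $ (t,x,y)"]) (simp_all add: nn)
    have b: "Q $ (t,x,y) \<le> pXY Q x y" unfolding pXY_def
      by (rule member_le_sum[where f = "\<lambda>t. Q $ (t,x,y)"]) (simp_all add: nn)
    have c: "pTY Q t y \<le> pY Q y" unfolding pY_def pTY_def[symmetric]
      by (rule member_le_sum[where f = "\<lambda>t. pTY Q t y"]) (simp_all add: pTYnn)
    show ?thesis
    proof (cases "Q $ (t,x,y) = 0")
      case True
      have "w z \<ge> 0" unfolding z w_def using pTYnn pXYnn pYnn by simp
      then show ?thesis unfolding z g_def using True by simp
    next
      case False
      then have q: "Q $ (t,x,y) > 0" using nn[of "(t,x,y)"] by linarith
      have "Q $ (t,x,y) - pTY Q t y * pXY Q x y / pY Q y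
          \<le> Q $ (t,x,y) * ln (Q $ (t,x,y) * pY Q y / (pTY Q t y * pXY Q x y))"
        by (rule gibbs_term) (use q a b c in linarith)+
      then show ?thesis unfolding z g_def w_def using False by simp
    qed
  qed
  have sw: "(\<Sum>z\<in>UNIV. w z) = 1"
  proof -
    have "(\<Sum>z\<in>UNIV. w z) = (\<Sum>y\<in>UNIV. (\<Sum>t\<in>UNIV. pTY Q t y) * (\<Sum>x\<in>UNIV. pXY Q x y) / pY Q y)"
      by (subst sum_triple3[of w]) (simp add: w_def sum_product sum_divide_distrib)
    also have "\<dots> = (\<Sum>y\<in>UNIV. pY Q y * pY Q y / pY Q y)"
      unfolding pY_alt[symmetric] by (simp add: pY_def pTY_def)
    also have "\<dots> = (\<Sum>y\<in>UNIV. pY Q y)" by (rule sum.cong) auto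
    also have "\<dots> = 1" unfolding s1[symmetric] sum_triple3[of "\<lambda>z. Q $ z"] pY_def by simp
    finally show ?thesis .
  qed
  have "(\<Sum>z\<in>UNIV. Q $ z - w z) \<le> (\<Sum>z\<in>UNIV. g z)" by (rule sum_mono) (rule le)
  then have "0 \<le> (\<Sum>z\<in>UNIV. g z)" using s1 sw by (simp add: sum_subtractf)
  moreover have "condMI_TX_Y Q = (\<Sum>z\<in>UNIV. g z)" unfolding condMI_TX_Y_def g_def by simp
  ultimately show ?thesis by simp
qed

lemma condMI_Y_nonneg:
  fixes Q :: "('t::finite,'x::finite,'y::finite) jdist"
  assumes "is_dist Q"
  shows "condMI_TY_X Q \<ge> 0"
proof -
  have nn: "\<And>z. Q $ z \<ge> 0" and s1: "(\<Sum>z\<in>UNIV. Q $ z) = 1" using assms unfolding is_dist_def by blast+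
  have pTXnn: "pTX Q t x \<ge> 0" for t x unfolding pTX_def by (rule sum_nonneg) (simp add: nn)
  have pXYnn: "pXY Q x y \<ge> 0" for x y unfolding pXY_def by (rule sum_nonneg) (simp add: nn)
  have pXnn: "pX Q x \<ge> 0" for x unfolding pX_def by (intro sum_nonneg) (simp add: nn)
  define w where "w z = (case z of (t,x,y) \<Rightarrow> pTX Q t x * pXY Q x y / pX Q x)" for z :: "'t \<times> 'x \<times> 'y"
  define g where "g z = (case z of (t,x,y) \<Rightarrow> if Q $ (t,x,y) = 0 then 0
       else Q $ (t,x,y) * ln (Q $ (t,x,y) * pX Q x / (pTX Q t x * pXY Q x y)))" for z :: "'t \<times> 'x \<times> 'y"
  have le: "Q $ z - w z \<le> g z" for z
  proof -
    obtain t x y where z: "z = (t,x,y)" by (cases z) auto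
    have a: "Q $ (t,x,y) \<le> pTX Q t x" unfolding pTX_def
      by (rule member_le_sum[where f = "\<lambda>y. Q $ (t,x,y)"]) (simp_all add: nn)
    have b: "Q $ (t,x,y) \<le> pXY Q x y" unfolding pXY_def
      by (rule member_le_sum[where f = "\<lambda>t. Q $ (t,x,y)"]) (simp_all add: nn)
    have c: "pTX Q t x \<le> pX Q x" unfolding pX_def pTX_def[symmetric]
      by (rule member_le_sum[where f = "\<lambda>t. pTX Q t x"]) (simp_all add: pTXnn)
    show ?thesis
    proof (cases "Q $ (t,x,y) = 0")
      case True
      have "w z \<ge> 0" unfolding z w_def using pTXnn pXYnn pXnn by simp
      then show ?thesis unfolding z g_def using True by simp
    next
      case False
      then have q: "Q $ (t,x,y) > 0" using nn[of "(t,x,y)"] by linarith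
      have "Q $ (t,x,y) - pTX Q t x * pXY Q x y / pX Q x
          \<le> Q $ (t,x,y) * ln (Q $ (t,x,y) * pX Q x / (pTX Q t x * pXY Q x y))"
        by (rule gibbs_term) (use q a b c in linarith)+
      then show ?thesis unfolding z g_def w_def using False by simp
    qed
  qed
  have sw: "(\<Sum>z\<in>UNIV. w z) = 1"
  proof -
    have "(\<Sum>z\<in>UNIV. w z) = (\<Sum>x\<in>UNIV. (\<Sum>t\<in>UNIV. pTX Q t x) * (\<Sum>y\<in>UNIV. pXY Q x y) / pX Q x)"
      by (subst sum_triple4[of w]) (simp add: w_def sum_product sum_divide_distrib)
    also have "\<dots> = (\<Sum>x\<in>UNIV. pX Q x * pX Q x / pX Q x)"
      unfolding pX_alt[symmetric] by (simp add: pX_def pTX_def)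
    also have "\<dots> = (\<Sum>x\<in>UNIV. pX Q x)" by (rule sum.cong) auto
    also have "\<dots> = 1" unfolding s1[symmetric] sum_triple4[of "\<lambda>z. Q $ z"] pX_def by simp
    finally show ?thesis .
  qed
  have "(\<Sum>z\<in>UNIV. Q $ z - w z) \<le> (\<Sum>z\<in>UNIV. g z)" by (rule sum_mono) (rule le)
  then have "0 \<le> (\<Sum>z\<in>UNIV. g z)" using s1 sw by (simp add: sum_subtractf)
  moreover have "condMI_TY_X Q = (\<Sum>z\<in>UNIV. g z)" unfolding condMI_TY_X_def g_def by simp
  ultimately show ?thesis by simp
qed

lemma condMI_X_zero:
  fixes Q :: "('t::finite,'x::finite,'y::finite) jdist"
  assumes pos: "\<And>z. Q $ z > 0" and ind: "indep_T_X_given_Y Q"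
  shows "condMI_TX_Y Q = 0"
  unfolding condMI_TX_Y_def
proof (rule sum.neutral, intro ballI)
  fix z :: "'t \<times> 'x \<times> 'y"
  obtain t x y where z: "z = (t,x,y)" by (cases z) auto
  have q: "Q $ (t,x,y) > 0" by (rule pos)
  have py: "pY Q y > 0" unfolding pY_def by (intro sum_pos) (auto intro: pos)
  have e: "Q $ (t,x,y) * pY Q y = pTY Q t y * pXY Q x y" using ind unfolding indep_T_X_given_Y_def by blast
  have "Q $ (t,x,y) * pY Q y > 0" using q py by simp
  then have "Q $ (t,x,y) * pY Q y / (pTY Q t y * pXY Q x y) = 1" unfolding e by (intro divide_self) linarith
  then show "(case z of (t, x, y) \<Rightarrow> if Q $ (t, x, y) = 0 then 0 else Q $ (t, x, y) * ln (Q $ (t, x, y) * pY Q y / (pTY Q t y * pXY Q x y))) = 0"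
    unfolding z by simp
qed

lemma condMI_Y_zero:
  fixes Q :: "('t::finite,'x::finite,'y::finite) jdist"
  assumes pos: "\<And>z. Q $ z > 0" and ind: "indep_T_Y_given_X Q"
  shows "condMI_TY_X Q = 0"
  unfolding condMI_TY_X_def
proof (rule sum.neutral, intro ballI)
  fix z :: "'t \<times> 'x \<times> 'y"
  obtain t x y where z: "z = (t,x,y)" by (cases z) auto
  have q: "Q $ (t,x,y) > 0" by (rule pos)
  have px: "pX Q x > 0" unfolding pX_def by (intro sum_pos) (auto intro: pos)
  have e: "Q $ (t,x,y) * pX Q x = pTX Q t x * pXY Q x y" using ind unfolding indep_T_Y_given_X_def by blast
  have "Q $ (t,x,y) * pX Q x > 0" using q px by simp
  then have "Q $ (t,x,y) * pX Q x / (pTX Q t x * pXY Q x y) = 1" unfolding e by (intro divide_self) linarith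
  then show "(case z of (t, x, y) \<Rightarrow> if Q $ (t, x, y) = 0 then 0 else Q $ (t, x, y) * ln (Q $ (t, x, y) * pX Q x / (pTX Q t x * pXY Q x y))) = 0"
    unfolding z by simp
qed



theorem mainTheorem12:
  fixes P Qt :: "('t::finite,'x::finite,'y::finite) jdist"
  assumes "CARD('t) = 2"
    and "is_dist P"
    and "suppDeltaP P = UNIV"
    and "Qt \<in> rel_interior (DeltaP P)"
    and "\<forall>Q\<in>DeltaP P. condH_T_XY Q \<le> condH_T_XY Qt"
  shows "(indep_T_X_given_Y Qt \<or> indep_T_Y_given_X Qt) \<and> (UI_X P = 0 \<or> UI_Y P = 0)"
proof -
  have QD: "Qt \<in> DeltaP P" using assms(4) rel_interior_subset by blast
  have pos: "\<And>z. Qt $ z > 0" by (rule pos_Qt[OF assms(4,3)])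
  obtain t0 t1 :: 't where U: "UNIV = {t0, t1}" and ne: "t0 \<noteq> t1"
    using assms(1) unfolding card_2_iff by blast
  define r where "r t x y = Qt $ (t,x,y) / pXY Qt x y" for t x y
  have rpos: "r t x y > 0" for t x y unfolding r_def using pos pXY_pos[OF pos] by simp
  have rsum: "r t1 x y = 1 - r t0 x y" for x y
  proof -
    have p: "pXY Qt x y > 0" by (rule pXY_pos[OF pos])
    have "pXY Qt x y = Qt $ (t0,x,y) + Qt $ (t1,x,y)" unfolding pXY_def U using ne by simp
    then show ?thesis unfolding r_def using p by (simp add: field_simps)
  qed
  have rprod: "r t x y * r t x' y' = r t x y' * r t x' y" for t x x' y y'
  proof -
    have "ln (r t x y) - ln (r t x y') - ln (r t x' y) + ln (r t x' y') = 0"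
      unfolding r_def by (rule FOC[OF QD pos assms(5)])
    then have "ln (r t x y * r t x' y') = ln (r t x y' * r t x' y)"
      using rpos[of t x y] rpos[of t x y'] rpos[of t x' y] rpos[of t x' y'] by (simp add: ln_mult)
    then show ?thesis using rpos[of t x y] rpos[of t x y'] rpos[of t x' y] rpos[of t x' y'] by simp
  qed
  define p where "p x y = r t0 x y" for x y
  have H: "(p x y = p x y' \<and> p x' y = p x' y') \<or> (p x y = p x' y \<and> p x y' = p x' y')" for x x' y y'
    unfolding p_def
    by (rule key_alg[OF rprod]) (use rprod[of t1 x y x' y'] in \<open>simp add: rsum\<close>)
  have tcases: "t = t0 \<or> t = t1" for t :: 't using U by auto
  have ind: "indep_T_X_given_Y Qt \<or> indep_T_Y_given_X Qt"
  proof (cases "\<forall>x y y'. p x y = p x y'")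
    case True
    have "r t x y = r t x y'" for t x y y'
      using tcases[of t] True unfolding p_def by (auto simp: rsum)
    then have "indep_T_Y_given_X Qt" by (intro indep_Y_from_r pos) (simp add: r_def)
    then show ?thesis by blast
  next
    case False
    then have A: "\<forall>x x' y. p x y = p x' y" using global_comb[of p] H by blast
    have "r t x y = r t x' y" for t x x' y
      using tcases[of t] A unfolding p_def by (auto simp: rsum)
    then have "indep_T_X_given_Y Qt" by (intro indep_X_from_r pos) (simp add: r_def)
    then show ?thesis by blast
  qed
  have dist: "\<And>Q. Q \<in> DeltaP P \<Longrightarrow> is_dist Q" unfolding DeltaP_def by blast
  have "UI_X P = 0 \<or> UI_Y P = 0"
    using ind
  proof
    assume i: "indep_T_X_given_Y Qt"
    have "UI_X P = 0" unfolding UI_X_def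
    proof (rule cInf_eq_minimum)
      show "0 \<in> condMI_TX_Y ` DeltaP P" using condMI_X_zero[OF pos i] QD by force
      show "\<And>v. v \<in> condMI_TX_Y ` DeltaP P \<Longrightarrow> 0 \<le> v" using condMI_X_nonneg dist by blast
    qed
    then show ?thesis by blast
  next
    assume i: "indep_T_Y_given_X Qt"
    have "UI_Y P = 0" unfolding UI_Y_def
    proof (rule cInf_eq_minimum)
      show "0 \<in> condMI_TY_X ` DeltaP P" using condMI_Y_zero[OF pos i] QD by force
      show "\<And>v. v \<in> condMI_TY_X ` DeltaP P \<Longrightarrow> 0 \<le> v" using condMI_Y_nonneg dist by blast
    qed
    then show ?thesis by blast
  qed
  with ind show ?thesis by blast
qed

end
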